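(* Let $\theta:\mathbb{A}\to\mathbb{A}^\lambda$ be a primitive substitution satisfying the standing assumptions with $c(\theta)=1$, and let $u=\theta(u)$ be its fixed point. Then $u$ is Weyl rationally almost periodic, and the approximating periodic sequences can be chosen with period $\lambda^k$: for every $\varepsilon>0$ there exist $k\ge1$ and a $\lambda^k$-periodic $w\in\mathbb{A}^{\mathbb{N}}$ with $d_W(u,w)<\varepsilon$.
   Context: Substitution $\theta:\mathbb{A}\to\mathbb{A}^\lambda$, $\lambda\ge2$, with iterates $\theta^k$; primitive: some $\theta^k(a)$ contains all letters for every $a$. Standing assumptions: $\theta(a_0)_0=a_0$, $\theta$ injective on letters, subshift infinite; $u$ the fixed point with $u[0]=a_0$. Column number $c(\theta)=\min_{k\ge1,0\le j<\lambda^k}|\{\theta^k(a)_j:a\in\mathbb{A}\}|$. Weyl pseudo-metric: $d_W(x,y)=\limsup_{N\to\infty}\sup_{\ell\ge0}\frac1N|\{\ell\le n<\ell+N:x[n]\ne y[n]\}|$; $x$ is Weyl rationally almost periodic if it is a $d_W$-limit of periodic sequences over the same alphabet. *)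

theory Defs
  imports "HOL-Analysis.Analysis" "HOL-Library.Liminf_Limsup"
begin

text \<open>A substitution of constant length lam over the finite alphabet 'a is
  a map th :: 'a => nat => 'a, where th a j (j < lam) is the j-th letter of th(a).\<close>

fun sub_iter :: "('a \<Rightarrow> nat \<Rightarrow> 'a) \<Rightarrow> nat \<Rightarrow> nat \<Rightarrow> 'a \<Rightarrow> nat \<Rightarrow> 'a" where
  "sub_iter th lam 0 a = (\<lambda>j. a)"
| "sub_iter th lam (Suc k) a = (\<lambda>j. th (sub_iter th lam k a (j div lam)) (j mod lam))"

definition primitive :: "('a \<Rightarrow> nat \<Rightarrow> 'a) \<Rightarrow> nat \<Rightarrow> bool" where
  "primitive th lam \<longleftrightarrow>
     (\<exists>k\<ge>1. \<forall>a b. \<exists>j<lam^k. sub_iter th lam k a j = b)"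

definition inj_letters :: "('a \<Rightarrow> nat \<Rightarrow> 'a) \<Rightarrow> nat \<Rightarrow> bool" where
  "inj_letters th lam \<longleftrightarrow> (\<forall>a b. (\<forall>j<lam. th a j = th b j) \<longrightarrow> a = b)"

definition sub_language :: "('a \<Rightarrow> nat \<Rightarrow> 'a) \<Rightarrow> nat \<Rightarrow> 'a list set" where
  "sub_language th lam = {w. \<exists>k a i. i + length w \<le> lam^k \<and>
       w = map (\<lambda>j. sub_iter th lam k a (i + j)) [0..<length w]}"

definition subshift :: "('a \<Rightarrow> nat \<Rightarrow> 'a) \<Rightarrow> nat \<Rightarrow> (nat \<Rightarrow> 'a) set" where
  "subshift th lam = {x. \<forall>n m. map (\<lambda>j. x (n + j)) [0..<m] \<in> sub_language th lam}"

definition column_number :: "('a \<Rightarrow> nat \<Rightarrow> 'a) \<Rightarrow> nat \<Rightarrow> nat" where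
  "column_number th lam = (LEAST c. \<exists>k\<ge>1. \<exists>j<lam^k.
       card (range (\<lambda>a. sub_iter th lam k a j)) = c)"

definition weyl_dist :: "(nat \<Rightarrow> 'a) \<Rightarrow> (nat \<Rightarrow> 'a) \<Rightarrow> ereal" where
  "weyl_dist x y = limsup (\<lambda>N. ereal (SUP l. real (card {n. l \<le> n \<and> n < l + N \<and> x n \<noteq> y n}) / real N))"

definition periodic_seq :: "(nat \<Rightarrow> 'a) \<Rightarrow> nat \<Rightarrow> bool" where
  "periodic_seq w p \<longleftrightarrow> p > 0 \<and> (\<forall>n. w (n + p) = w n)"

definition weyl_rap :: "(nat \<Rightarrow> 'a) \<Rightarrow> bool" where
  "weyl_rap x \<longleftrightarrow> (\<forall>\<epsilon>>0. \<exists>w p. periodic_seq w p \<and> weyl_dist x w < ereal \<epsilon>)"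

end

theory Submission
  imports Defs
begin

lemma u_block:
  assumes lam: "lam > 0"
    and fx: "\<forall>n j. j < lam \<longrightarrow> u (lam * n + j) = th (u n) j"
  shows "r < lam^K \<Longrightarrow> u (lam^K * q + r) = sub_iter th lam K (u q) r"
proof (induction K arbitrary: r)
  case 0
  then show ?case by simp
next
  case (Suc K)
  have eq: "lam^(Suc K) * q + r = lam * (lam^K * q + r div lam) + r mod lam"
    by (simp add: algebra_simps)
  have lt: "r div lam < lam^K"
    using Suc.prems lam by (simp add: div_less_iff_less_mult mult.commute)
  have "u (lam^(Suc K) * q + r) = th (u (lam^K * q + r div lam)) (r mod lam)"
    unfolding eq using fx lam by simp
  also have "\<dots> = sub_iter th lam (Suc K) (u q) r"
    using Suc.IH[OF lt] by simp
  finally show ?case .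
qed

lemma mod_mult_div: "(n::nat) mod (a * b) div a = (n div a) mod b"
  apply (cases "a = 0", simp)
  apply (simp add: mod_mult2_eq)
  done

lemma digit_mod:
  fixes n L :: nat
  assumes "i < M"
  shows "(n mod L^M div L^i) mod L = (n div L^i) mod L"
proof -
  have LM: "L^M = L^i * L^(M-i)" using assms by (simp add: power_add[symmetric])
  have "n mod L^M div L^i = (n div L^i) mod L^(M-i)"
    unfolding LM by (rule mod_mult_div)
  moreover have "L dvd L^(M-i)" using assms by (simp add: dvd_power)
  ultimately show ?thesis by (simp add: mod_mod_cancel)
qed

lemma window_one:
  fixes P l :: nat
  assumes "P > 0" "\<forall>n. bad n \<longrightarrow> n mod P \<in> B" "finite B"
  shows "card {n. l \<le> n \<and> n < l + P \<and> bad n} \<le> card B"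
proof (rule card_inj_on_le[where f = "\<lambda>n. n mod P"])
  show "inj_on (\<lambda>n. n mod P) {n. l \<le> n \<and> n < l + P \<and> bad n}"
  proof (rule inj_onI)
    fix x y assume x: "x \<in> {n. l \<le> n \<and> n < l + P \<and> bad n}"
      and y: "y \<in> {n. l \<le> n \<and> n < l + P \<and> bad n}" and e: "x mod P = y mod P"
    show "x = y"
    proof (cases "x \<le> y")
      case True
      then have "P dvd y - x" using e mod_eq_dvd_iff_nat by metis
      moreover have "y - x < P" using x y by auto
      ultimately show ?thesis using True by (metis diff_is_0_eq dvd_imp_le le_antisym not_le neq0_conv)
    next
      case False
      then have "P dvd x - y" using e mod_eq_dvd_iff_nat by (metis nat_le_linear)
      moreover have "x - y < P" using x y by auto
      ultimately show ?thesis using False by (metis diff_is_0_eq dvd_imp_le not_le neq0_conv)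
    qed
  qed
  show "(\<lambda>n. n mod P) ` {n. l \<le> n \<and> n < l + P \<and> bad n} \<subseteq> B" using assms by auto
  show "finite B" by fact
qed

lemma window:
  fixes P :: nat
  assumes "P > 0" "\<forall>n. bad n \<longrightarrow> n mod P \<in> B" "finite B"
  shows "card {n. l \<le> n \<and> n < l + c * P \<and> bad n} \<le> c * card B"
proof (induction c arbitrary: l)
  case 0 then show ?case by simp
next
  case (Suc c)
  have sub: "{n. l \<le> n \<and> n < l + Suc c * P \<and> bad n} \<subseteq>
     {n. l \<le> n \<and> n < l + P \<and> bad n} \<union> {n. l + P \<le> n \<and> n < (l + P) + c * P \<and> bad n}"
    by auto
  have "card {n. l \<le> n \<and> n < l + Suc c * P \<and> bad n} \<le>
     card ({n. l \<le> n \<and> n < l + P \<and> bad n} \<union> {n. l + P \<le> n \<and> n < (l + P) + c * P \<and> bad n})"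
    by (rule card_mono[OF _ sub]) auto
  also have "\<dots> \<le> card {n. l \<le> n \<and> n < l + P \<and> bad n} + card {n. l + P \<le> n \<and> n < (l + P) + c * P \<and> bad n}"
    by (rule card_Un_le)
  also have "\<dots> \<le> card B + c * card B"
    using window_one[OF assms, of l] Suc.IH[of "l + P"] by linarith
  finally show ?case by simp
qed

lemma count_B:
  fixes L j :: nat
  assumes "j < L"
  shows "card {r. r < L^M \<and> (\<forall>i<M. (r div L^i) mod L \<noteq> j)} \<le> (L-1)^M"
proof (induction M)
  case 0
  have "{r. r < L^0 \<and> (\<forall>i<0. (r div L^i) mod L \<noteq> j)} = {0}" by auto
  then show ?case by simp
next
  case (Suc M)
  let ?B = "\<lambda>M. {r. r < L^M \<and> (\<forall>i<M. (r div L^i) mod L \<noteq> j)}"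
  have fin: "finite (?B M)" by auto
  have sub: "?B (Suc M) \<subseteq> (\<lambda>(a,s). a + L * s) ` ({a. a<L \<and> a\<noteq>j} \<times> ?B M)"
  proof
    fix r assume r: "r \<in> ?B (Suc M)"
    have Lp: "L > 0" using assms by simp
    have "r mod L \<noteq> j" using r by (metis (mono_tags, lifting) mem_Collect_eq power_0 div_by_1 zero_less_Suc)
    moreover have "r mod L < L" using Lp by simp
    moreover have "r div L < L^M" using r Lp by (simp add: div_less_iff_less_mult mult.commute)
    moreover have "\<forall>i<M. (r div L div L^i) mod L \<noteq> j"
    proof (intro allI impI)
      fix i assume "i < M"
      then have "(r div L^(Suc i)) mod L \<noteq> j" using r by auto
      then show "(r div L div L^i) mod L \<noteq> j" by (simp add: div_mult2_eq)
    qed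
    ultimately have "(r mod L, r div L) \<in> {a. a<L \<and> a\<noteq>j} \<times> ?B M" by auto
    moreover have "r = r mod L + L * (r div L)" by simp
    ultimately show "r \<in> (\<lambda>(a,s). a + L * s) ` ({a. a<L \<and> a\<noteq>j} \<times> ?B M)"
      by (metis (no_types, lifting) case_prod_conv image_eqI)
  qed
  have "card (?B (Suc M)) \<le> card ((\<lambda>(a,s). a + L * s) ` ({a. a<L \<and> a\<noteq>j} \<times> ?B M))"
    by (rule card_mono[OF _ sub]) (simp add: fin)
  also have "\<dots> \<le> card ({a. a<L \<and> a\<noteq>j} \<times> ?B M)" by (rule card_image_le) (simp add: fin)
  also have "\<dots> = card {a. a<L \<and> a\<noteq>j} * card (?B M)" by (simp add: card_cartesian_product)
  also have "card {a. a<L \<and> a\<noteq>j} = L - 1"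
  proof -
    have "{a. a<L \<and> a\<noteq>j} = {..<L} - {j}" by auto
    then show ?thesis using assms by simp
  qed
  finally have "card (?B (Suc M)) \<le> (L-1) * card (?B M)" .
  also have "\<dots> \<le> (L-1) * (L-1)^M" using Suc.IH by simp
  finally show ?case by simp
qed

theorem mainTheorem8:
  fixes th :: "'a::finite \<Rightarrow> nat \<Rightarrow> 'a" and lam :: nat and a0 :: 'a and u :: "nat \<Rightarrow> 'a"
  assumes "lam \<ge> 2"
    and "primitive th lam"
    and "th a0 0 = a0"
    and "inj_letters th lam"
    and "infinite (subshift th lam)"
    and "column_number th lam = 1"
    and "u 0 = a0"
    and "\<forall>n j. j < lam \<longrightarrow> u (lam * n + j) = th (u n) j"
  shows "weyl_rap u \<and>
    (\<forall>\<epsilon>>0. \<exists>k\<ge>1. \<exists>w. periodic_seq w (lam^k) \<and> weyl_dist u w < ereal \<epsilon>)"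
proof -
  have lam0: "lam > 0" using assms(1) by simp
  have fx: "\<forall>n j. j < lam \<longrightarrow> u (lam * n + j) = th (u n) j" using assms(8) .
  define Q where "Q = (\<lambda>c. \<exists>k\<ge>1. \<exists>j<lam^k. card (range (\<lambda>a. sub_iter th lam k a j)) = c)"
  have "Q (card (range (\<lambda>a. sub_iter th lam 1 a 0)))" unfolding Q_def using lam0
    by (intro exI[of _ 1] conjI exI[of _ 0]) auto
  then have "Q (LEAST c. Q c)" by (rule LeastI)
  moreover have "(LEAST c. Q c) = 1" using assms(6) unfolding column_number_def Q_def by simp
  ultimately obtain k j where k1: "k \<ge> 1" and jk: "j < lam^k"
    and c1: "card (range (\<lambda>a. sub_iter th lam k a j)) = 1" unfolding Q_def by auto
  then obtain b where rb: "range (\<lambda>a. sub_iter th lam k a j) = {b}" by (metis card_1_singletonE)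
  then have cb: "\<And>a. sub_iter th lam k a j = b" by auto
  define L where "L = lam^k"
  have jL: "j < L" using jk L_def by simp
  have L0: "L > 0" using jL by simp
  have det: "u n = sub_iter th lam (k*i) b (n mod L^i)" if dj: "(n div L^i) mod L = j" for n i
  proof -
    define m where "m = n div L^i"
    have Li: "L^i = lam^(k*i)" unfolding L_def by (simp add: power_mult)
    have n_eq: "n = lam^(k*i) * m + n mod lam^(k*i)" unfolding m_def Li[symmetric] by simp
    have "n mod lam^(k*i) < lam^(k*i)" using lam0 by simp
    then have un: "u n = sub_iter th lam (k*i) (u m) (n mod L^i)"
      using u_block[OF lam0 fx, of "n mod lam^(k*i)" "k*i" m] n_eq Li by simp
    have m_eq: "m = lam^k * (m div L) + j" using dj unfolding m_def L_def by (metis div_mult_mod_eq add.commute mult.commute)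
    have "u m = sub_iter th lam k (u (m div L)) j"
      using u_block[OF lam0 fx, of j k "m div L"] jk m_eq by simp
    then have "u m = b" using cb by simp
    then show ?thesis using un by simp
  qed
  have H: "\<forall>\<epsilon>>0. \<exists>k\<ge>1. \<exists>w. periodic_seq w (lam^k) \<and> weyl_dist u w < ereal \<epsilon>"
  proof (intro allI impI)
    fix \<epsilon> :: real assume ep: "\<epsilon> > 0"
    define x where "x = (real L - 1) / real L"
    have x0: "0 \<le> x" unfolding x_def using L0 by simp
    have x1: "x < 1" unfolding x_def using L0 by simp
    obtain M0 where M0: "x ^ M0 < \<epsilon>" using real_arch_pow_inv[OF ep x1] by blast
    define M where "M = Suc M0"
    have xM: "x ^ M < \<epsilon>" using M0 power_decreasing[of M0 M x] x0 x1 unfolding M_def by simp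
    define P where "P = L^M"
    have P0: "P > 0" unfolding P_def using L0 by simp
    define w where "w = (\<lambda>n. u (n mod P))"
    define B where "B = {r. r < L^M \<and> (\<forall>i<M. (r div L^i) mod L \<noteq> j)}"
    have finB: "finite B" unfolding B_def by auto
    have cardB: "card B \<le> (L-1)^M" unfolding B_def using count_B[OF jL] .
    have bad: "\<forall>n. u n \<noteq> w n \<longrightarrow> n mod P \<in> B"
    proof (intro allI impI)
      fix n assume ne: "u n \<noteq> w n"
      show "n mod P \<in> B"
      proof (rule ccontr)
        assume "n mod P \<notin> B"
        moreover have "n mod P < L^M" using P0 P_def by simp
        ultimately obtain i where iM: "i < M" and di: "(n mod P div L^i) mod L = j"
          unfolding B_def by auto
        have di2: "(n div L^i) mod L = j" using di digit_mod[OF iM] P_def by simp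
        have mm: "n mod P mod L^i = n mod L^i"
          unfolding P_def using iM by (simp add: mod_mod_cancel le_imp_power_dvd)
        have "u n = sub_iter th lam (k*i) b (n mod L^i)" using det di2 by blast
        moreover have "w n = sub_iter th lam (k*i) b (n mod L^i)"
          unfolding w_def using det[OF di] mm by simp
        ultimately show False using ne by simp
      qed
    qed
    have per: "periodic_seq w (lam^(k*M))"
      unfolding periodic_seq_def w_def
      using P0 by (simp add: P_def L_def power_mult)
    have kM: "k*M \<ge> 1" using k1 M_def by simp
    define cB where "cB = real (card B)"
    have bnd: "(SUP l. real (card {n. l \<le> n \<and> n < l + N \<and> u n \<noteq> w n}) / real N)
               \<le> cB / real P + cB / real N" for N
    proof (rule cSUP_least)
      show "UNIV \<noteq> {}" by simp
      fix l
      have "N < (N div P + 1) * P"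
      proof -
        have e: "N = N div P * P + N mod P" by simp
        have "N mod P < P" using P0 by simp
        then show ?thesis unfolding distrib_right using e by linarith
      qed
      then have "{n. l \<le> n \<and> n < l + N \<and> u n \<noteq> w n} \<subseteq> {n. l \<le> n \<and> n < l + (N div P + 1) * P \<and> u n \<noteq> w n}"
        by auto
      then have "card {n. l \<le> n \<and> n < l + N \<and> u n \<noteq> w n} \<le> card {n. l \<le> n \<and> n < l + (N div P + 1) * P \<and> u n \<noteq> w n}"
        by (rule card_mono[rotated]) auto
      also have "\<dots> \<le> (N div P + 1) * card B" by (rule window[OF P0 bad finB])
      finally have c0: "real (card {n. l \<le> n \<and> n < l + N \<and> u n \<noteq> w n}) \<le> real ((N div P + 1) * card B)"
        by (simp only: of_nat_le_iff)
      have c: "real (card {n. l \<le> n \<and> n < l + N \<and> u n \<noteq> w n}) \<le> (real (N div P) + 1) * cB"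
        using c0 unfolding cB_def by (simp add: algebra_simps)
      show "real (card {n. l \<le> n \<and> n < l + N \<and> u n \<noteq> w n}) / real N \<le> cB / real P + cB / real N"
      proof (cases "N = 0")
        case True then show ?thesis using P0 cB_def by simp
      next
        case False
        have "N div P * P \<le> N" by (metis div_mult_mod_eq le_add1)
        then have "real (N div P) * real P \<le> real N"
          by (simp only: of_nat_le_iff of_nat_mult[symmetric])
        then have dv: "real (N div P) \<le> real N / real P" using P0 by (simp add: field_simps)
        have cB0: "cB \<ge> 0" unfolding cB_def by simp
        have "(real (N div P) + 1) * cB \<le> (real N / real P + 1) * cB"
          using dv cB0 by (simp add: mult_right_mono)
        with c have "real (card {n. l \<le> n \<and> n < l + N \<and> u n \<noteq> w n}) \<le> (real N / real P + 1) * cB" by linarith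
        then have "real (card {n. l \<le> n \<and> n < l + N \<and> u n \<noteq> w n}) / real N \<le> (real N / real P + 1) * cB / real N"
          using False by (simp add: divide_right_mono)
        also have "\<dots> = cB / real P + cB / real N" using False P0 by (simp add: field_simps)
        finally show ?thesis .
      qed
    qed
    have "weyl_dist u w \<le> limsup (\<lambda>N. ereal (cB / real P + cB / real N))"
      unfolding weyl_dist_def by (rule Limsup_mono) (use bnd in auto)
    also have "limsup (\<lambda>N. ereal (cB / real P + cB / real N)) = ereal (cB / real P)"
    proof (rule lim_imp_Limsup)
      show "sequentially \<noteq> bot" by simp
      have "(\<lambda>N. cB / real P + cB / real N) \<longlonglongrightarrow> cB / real P + 0"
        by (intro tendsto_add tendsto_const lim_const_over_n)
      then show "(\<lambda>N. ereal (cB / real P + cB / real N)) \<longlonglongrightarrow> ereal (cB / real P)"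
        by (simp add: lim_ereal)
    qed
    also have "cB / real P \<le> x ^ M"
    proof -
      have "real (card B) \<le> real ((L-1)^M)" using cardB by (simp only: of_nat_le_iff)
      then have "cB \<le> (real L - 1)^M" unfolding cB_def using L0 by (simp add: of_nat_diff)
      then have "cB / real P \<le> (real L - 1)^M / real P" using P0 by (simp add: divide_right_mono)
      also have "\<dots> = x ^ M" unfolding x_def P_def by (simp add: power_divide)
      finally show ?thesis .
    qed
    then have "ereal (cB / real P) < ereal \<epsilon>" using xM by simp
    finally have "weyl_dist u w < ereal \<epsilon>" .
    then show "\<exists>k\<ge>1. \<exists>w. periodic_seq w (lam^k) \<and> weyl_dist u w < ereal \<epsilon>"
      using per kM by blast
  qed
  moreover have "weyl_rap u"
    unfolding weyl_rap_def using H by blast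
  ultimately show ?thesis by blast
qed

end
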